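(* Let $(N,\underline X)\in\aleph^{FGM*}$. For every $n\in A_N$ and $x\ge0$, $$F_{X\mid N=n}(x)=\frac{1}{\gamma_N(n)}\sum_{(i_0,i_1)\in\{0,1\}^2}f_{I_0,I_1}(i_0,i_1)\,\gamma_{N_{[1+i_0]}}(n)\,F_{X_{[1+i_1]}}(x),$$ where $f_{I_0,I_1}(i_0,i_1)=\tfrac14\big(1+(-1)^{i_0+i_1}\theta_{01}\big)$, or equivalently $$F_{X\mid N=n}(x)=F_X(x)+\frac{\theta_{01}}{4}\,\frac{\gamma_{N_{[2]}}(n)-\gamma_{N_{[1]}}(n)}{\gamma_N(n)}\big(F_{X_{[2]}}(x)-F_{X_{[1]}}(x)\big).$$ Here $F_{X\mid N=n}$ is the conditional cdf of $X_1$ given $N=n$ (which, by exchangeability, is that of any $X_j$).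
   Context: Collective risk model (CRM): $N$ is a random variable with values in $\mathbb{N}_0$, cdf $F_N$, pmf $\gamma_N(n)=\Pr(N=n)$ and support $A_N=\{n:\gamma_N(n)>0\}$; $\underline X=\{X_j\}_{j\ge1}$ is a sequence of identically distributed strictly positive random variables with common cdf $F_X$ (generic copy $X$). A $d$-variate FGM copula with parameters $\theta_{j_1\dots j_k}$ is $C(u_1,\dots,u_d)=\prod_{m=1}^d u_m\big(1+\sum_{k=2}^d\sum_{j_1<\dots<j_k}\theta_{j_1\dots j_k}\bar u_{j_1}\cdots\bar u_{j_k}\big)$, $\bar u=1-u$, with parameters such that $1+\sum_{k}\sum_{j_1<\dots<j_k}\theta_{j_1\dots j_k}\varepsilon_{j_1}\cdots\varepsilon_{j_k}\ge0$ for all $\varepsilon\in\{-1,1\}^d$. A CRM belongs to $\aleph^{FGM}$ if for every $k\in\mathbb{N}_1$, $k\le\sup A_N$, $F_{N,X_1,\dots,X_k}(n,x_1,\dots,x_k)=C_k(F_N(n),F_X(x_1),\dots,F_X(x_k))$ for a $(k+1)$-variate FGM copula $C_k$ with coordinates indexed $0,\dots,k$ (index $0$ for $N$). It belongs to $\aleph^{FGM*}$ if in addition $(N,X_1,\dots,X_k)\overset d=(N,X_{\pi(1)},\dots,X_{\pi(k)})$ for all such $k$ and all permutations $\pi$; then $\theta_{0j}=\theta_{01}$, $\theta_{ij}=\theta_{12}$, $\theta_{0ij}=\theta_{012}$ for all $1\le i<j$. For a random variable $Y$, $Y_{[1]}$, $Y_{[2]}$ denote the minimum and maximum of two iid copies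 of $Y$, with cdfs $F_{Y_{[j]}}$; $\gamma_{N_{[j]}}(n)=\Pr(N_{[j]}=n)$. *)

theory Defs
  imports "HOL-Probability.Probability" "HOL-Combinatorics.Permutations"
begin

definition FGM_copula :: "nat \<Rightarrow> (nat set \<Rightarrow> real) \<Rightarrow> (nat \<Rightarrow> real) \<Rightarrow> real" where
  "FGM_copula k \<theta> u =
     (\<Prod>m\<le>k. u m) *
     (1 + (\<Sum>S\<in>{S. S \<subseteq> {..k} \<and> 2 \<le> card S}. \<theta> S * (\<Prod>j\<in>S. 1 - u j)))"

definition FGM_params :: "nat \<Rightarrow> (nat set \<Rightarrow> real) \<Rightarrow> bool" where
  "FGM_params k \<theta> \<longleftrightarrow>
     (\<forall>\<epsilon>::nat \<Rightarrow> real. (\<forall>j\<le>k. \<epsilon> j \<in> {-1, 1}) \<longrightarrow>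
        0 \<le> 1 + (\<Sum>S\<in>{S. S \<subseteq> {..k} \<and> 2 \<le> card S}. \<theta> S * (\<Prod>j\<in>S. \<epsilon> j)))"

text \<open>Membership of (N, X) in aleph^{FGM*}: for each k >= 1 with k <= sup A_N the
  joint cdf of (N, X_1..X_k) is an FGM copula (parameters theta k) evaluated at the
  marginal cdfs, and (N, X_1..X_k) is invariant in distribution under permutations
  of X_1..X_k.\<close>
definition CRM_FGM_star ::
  "'a measure \<Rightarrow> ('a \<Rightarrow> nat) \<Rightarrow> (nat \<Rightarrow> 'a \<Rightarrow> real) \<Rightarrow> (nat \<Rightarrow> nat set \<Rightarrow> real) \<Rightarrow> bool" where
  "CRM_FGM_star M N X \<theta> \<longleftrightarrow>
     prob_space M \<and>
     N \<in> measurable M (count_space UNIV) \<and>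
     (\<forall>j\<ge>1. X j \<in> borel_measurable M) \<and>
     (\<forall>j\<ge>1. \<forall>\<omega>\<in>space M. 0 < X j \<omega>) \<and>
     (\<forall>j\<ge>1. distr M borel (X j) = distr M borel (X 1)) \<and>
     (\<forall>k\<ge>1. (\<exists>n. 0 < measure M {\<omega>\<in>space M. N \<omega> = n} \<and> k \<le> n) \<longrightarrow>
        FGM_params k (\<theta> k) \<and>
        (\<forall>(n::nat) (x::nat \<Rightarrow> real).
           measure M {\<omega>\<in>space M. N \<omega> \<le> n \<and> (\<forall>j\<in>{1..k}. X j \<omega> \<le> x j)} =
           FGM_copula k (\<theta> k)
             (\<lambda>m. if m = 0 then measure M {\<omega>\<in>space M. N \<omega> \<le> n}
                  else measure M {\<omega>\<in>space M. X 1 \<omega> \<le> x m})) \<and>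
        (\<forall>\<pi>. \<pi> permutes {1..k} \<longrightarrow>
           distr M (count_space UNIV \<Otimes>\<^sub>M PiM {1..k} (\<lambda>_. borel))
             (\<lambda>\<omega>. (N \<omega>, \<lambda>j\<in>{1..k}. X j \<omega>)) =
           distr M (count_space UNIV \<Otimes>\<^sub>M PiM {1..k} (\<lambda>_. borel))
             (\<lambda>\<omega>. (N \<omega>, \<lambda>j\<in>{1..k}. X (\<pi> j) \<omega>))))"

definition ord_cdf :: "real measure \<Rightarrow> nat \<Rightarrow> real \<Rightarrow> real" where
  "ord_cdf D j x = measure (D \<Otimes>\<^sub>M D)
     {(a, b) \<in> space (D \<Otimes>\<^sub>M D). (if j = 1 then min a b else max a b) \<le> x}"

definition ord_pmf :: "nat measure \<Rightarrow> nat \<Rightarrow> nat \<Rightarrow> real" where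
  "ord_pmf D j n = measure (D \<Otimes>\<^sub>M D)
     {(a, b) \<in> space (D \<Otimes>\<^sub>M D). (if j = 1 then min a b else max a b) = n}"

end

theory Submission imports Defs begin

lemma pair_times:
  assumes D: "prob_space D" and A: "A \<in> sets D" and B: "B \<in> sets D"
  shows "measure (D \<Otimes>\<^sub>M D) (A \<times> B) = measure D A * measure D B"
proof -
  interpret prob_space D by fact
  have "emeasure (D \<Otimes>\<^sub>M D) (A \<times> B) = emeasure D A * emeasure D B"
    using emeasure_pair_measure_Times[OF A B] .
  then show ?thesis
    by (simp add: measure_def enn2real_mult)
qed

lemma pp: "prob_space D \<Longrightarrow> prob_space (D \<Otimes>\<^sub>M D)"
proof -
  assume "prob_space D"
  then interpret pair_prob_space D D by (simp add: pair_prob_space.intro pair_sigma_finite_def prob_space_imp_sigma_finite)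
  show ?thesis by (rule P.prob_space_axioms)
qed

lemma ord_cdf_2:
  assumes D: "prob_space D" and sD: "sets D = sets borel"
  shows "ord_cdf D 2 x = (measure D {..x})^2"
proof -
  have "{(a, b) \<in> space (D \<Otimes>\<^sub>M D). (if (2::nat) = 1 then min a b else max a b) \<le> x} = {..x} \<times> {..x}"
    using sets_eq_imp_space_eq[OF sD] by (auto simp: space_pair_measure)
  then show ?thesis unfolding ord_cdf_def
    using pair_times[OF D, of "{..x}" "{..x}"] sD by (simp add: power2_eq_square)
qed

lemma ord_cdf_1:
  assumes D: "prob_space D" and sD: "sets D = sets borel"
  shows "ord_cdf D 1 x = 1 - (1 - measure D {..x})^2"
proof -
  interpret P: prob_space "D \<Otimes>\<^sub>M D" using pp[OF D] .
  interpret D: prob_space D by fact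
  have sp: "space D = UNIV" using sets_eq_imp_space_eq[OF sD] by simp
  have e: "{(a, b) \<in> space (D \<Otimes>\<^sub>M D). (if (1::nat) = 1 then min a b else max a b) \<le> x}
     = space (D \<Otimes>\<^sub>M D) - {x<..} \<times> {x<..}"
    using sp by (auto simp: space_pair_measure)
  have m: "{x<..} \<times> {x<..} \<in> sets (D \<Otimes>\<^sub>M D)" using sD by simp
  have c: "measure D {x<..} = 1 - measure D {..x}"
  proof -
    have "{x<..} = space D - {..x}" using sp by auto
    then show ?thesis using D.prob_compl[of "{..x}"] sD by simp
  qed
  show ?thesis unfolding ord_cdf_def e
    using P.prob_compl[OF m] pair_times[OF D, of "{x<..}" "{x<..}"] sD c
    by (simp add: power2_eq_square)
qed

lemma ord_pmf_2:
  assumes D: "prob_space D" and sD: "sets D = UNIV"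
  shows "ord_pmf D 2 n = (measure D {..n})^2 - (measure D {..<n})^2"
proof -
  interpret P: prob_space "D \<Otimes>\<^sub>M D" using pp[OF D] .
  have sp: "space D = UNIV" using sD by (metis sets.top UNIV_I sets.sets_into_space subset_antisym subsetI)
  have e: "{(a, b) \<in> space (D \<Otimes>\<^sub>M D). (if (2::nat) = 1 then min a b else max a b) = n}
     = {..n} \<times> {..n} - {..<n} \<times> {..<n}"
    using sp by (auto simp: space_pair_measure)
  show ?thesis unfolding ord_pmf_def e
    apply (subst P.finite_measure_Diff)
    using pair_times[OF D, of "{..n}" "{..n}"] pair_times[OF D, of "{..<n}" "{..<n}"] sD
    by (auto simp: power2_eq_square)
qed

lemma ord_pmf_1:
  assumes D: "prob_space D" and sD: "sets D = UNIV"
  shows "ord_pmf D 1 n = (1 - measure D {..<n})^2 - (1 - measure D {..n})^2"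
proof -
  interpret P: prob_space "D \<Otimes>\<^sub>M D" using pp[OF D] .
  interpret D: prob_space D by fact
  have sp: "space D = UNIV" using sD by (metis sets.top UNIV_I sets.sets_into_space subset_antisym subsetI)
  have e: "{(a, b) \<in> space (D \<Otimes>\<^sub>M D). (if (1::nat) = 1 then min a b else max a b) = n}
     = {n..} \<times> {n..} - {n<..} \<times> {n<..}"
    using sp by (auto simp: space_pair_measure)
  have c1: "measure D {n..} = 1 - measure D {..<n}"
  proof -
    have "{n..} = space D - {..<n}" using sp by auto
    then show ?thesis using D.prob_compl[of "{..<n}"] sD by simp
  qed
  have c2: "measure D {n<..} = 1 - measure D {..n}"
  proof -
    have "{n<..} = space D - {..n}" using sp by auto
    then show ?thesis using D.prob_compl[of "{..n}"] sD by simp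
  qed
  show ?thesis unfolding ord_pmf_def e
    apply (subst P.finite_measure_Diff)
    using pair_times[OF D, of "{n..}" "{n..}"] pair_times[OF D, of "{n<..}" "{n<..}"] sD c1 c2
    by (auto simp: power2_eq_square)
qed


lemma FGM1: "FGM_copula 1 th u = u 0 * u 1 * (1 + th {0,1} * ((1 - u 0) * (1 - u 1)))"
proof -
  have S: "{S. S \<subseteq> {..1::nat} \<and> 2 \<le> card S} = {{0,1}}"
  proof (rule set_eqI, rule iffI)
    fix S assume "S \<in> {S. S \<subseteq> {..1::nat} \<and> 2 \<le> card S}"
    then have a: "S \<subseteq> {0,1}" "2 \<le> card S" by auto
    have "card S \<le> card {0,1::nat}" using a(1) by (intro card_mono) auto
    then have "card S = card {0,1::nat}" using a(2) by simp
    then have "S = {0,1}" using a(1) by (intro card_subset_eq) auto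
    then show "S \<in> {{0,1}}" by simp
  qed auto
  have P: "{..1::nat} = {0,1}" by auto
  show ?thesis unfolding FGM_copula_def S unfolding P by simp
qed

lemma algebra_final:
  fixes a q F th :: real
  assumes g: "a - q > 0"
  shows "(a*F*(1+th*(1-a)*(1-F)) - q*F*(1+th*(1-q)*(1-F))) / (a - q) =
     (1/(a-q)) * ((1 + th)/4 * ((1-q)^2 - (1-a)^2) * (1 - (1-F)^2)
                + (1 - th)/4 * ((1-q)^2 - (1-a)^2) * F^2
                + (1 - th)/4 * (a^2 - q^2) * (1 - (1-F)^2)
                + (1 + th)/4 * (a^2 - q^2) * F^2)
   \<and> (a*F*(1+th*(1-a)*(1-F)) - q*F*(1+th*(1-q)*(1-F))) / (a - q) =
     F + th/4 * (((a^2 - q^2) - ((1-q)^2 - (1-a)^2)) / (a - q)) * (F^2 - (1 - (1-F)^2))"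
  using g by (auto simp: field_simps power2_eq_square)

theorem mainTheorem3:
  fixes M :: "'a measure" and N :: "'a \<Rightarrow> nat" and X :: "nat \<Rightarrow> 'a \<Rightarrow> real"
    and \<theta> :: "nat \<Rightarrow> nat set \<Rightarrow> real" and n :: nat and x :: real
  assumes crm: "CRM_FGM_star M N X \<theta>"
    and n_supp: "0 < measure M {\<omega>\<in>space M. N \<omega> = n}"
    and x_nonneg: "0 \<le> x"
  shows
    "let \<gamma>N = measure M {\<omega>\<in>space M. N \<omega> = n};
         FX = measure M {\<omega>\<in>space M. X 1 \<omega> \<le> x};
         FXcond = measure M {\<omega>\<in>space M. X 1 \<omega> \<le> x \<and> N \<omega> = n} / \<gamma>N;
         DN = distr M (count_space UNIV) N;
         DX = distr M borel (X 1);
         \<theta>01 = \<theta> 1 {0, 1};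
         f = (\<lambda>i0 i1::nat. (1 + (-1) ^ (i0 + i1) * \<theta>01) / 4)
     in FXcond = (1 / \<gamma>N) * (\<Sum>i0\<in>{0,1}. \<Sum>i1\<in>{0,1}.
                     f i0 i1 * ord_pmf DN (1 + i0) n * ord_cdf DX (1 + i1) x)
      \<and> FXcond = FX + \<theta>01 / 4 * ((ord_pmf DN 2 n - ord_pmf DN 1 n) / \<gamma>N)
                        * (ord_cdf DX 2 x - ord_cdf DX 1 x)"
proof -
  have PM: "prob_space M" and Nm: "N \<in> measurable M (count_space UNIV)"
    and X1m: "X 1 \<in> borel_measurable M"
    using crm unfolding CRM_FGM_star_def by auto
  interpret prob_space M by fact
  define DN where "DN = distr M (count_space UNIV) N"
  define DX where "DX = distr M borel (X 1)"
  have pDN: "prob_space DN" unfolding DN_def by (rule prob_space_distr[OF Nm])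
  have pDX: "prob_space DX" unfolding DX_def by (rule prob_space_distr[OF X1m])
  have sDN: "sets DN = UNIV" unfolding DN_def by simp
  have sDX: "sets DX = sets borel" unfolding DX_def by simp
  have mN: "\<And>A. measure DN A = measure M {\<omega>\<in>space M. N \<omega> \<in> A}"
    unfolding DN_def by (subst measure_distr[OF Nm]) (auto simp: vimage_def Int_def conj_commute)
  have mX: "measure DX {..x} = measure M {\<omega>\<in>space M. X 1 \<omega> \<le> x}"
    unfolding DX_def by (subst measure_distr[OF X1m]) (auto simp: vimage_def Int_def conj_commute)
  define a where "a = measure M {\<omega>\<in>space M. N \<omega> \<le> n}"
  define q where "q = measure M {\<omega>\<in>space M. N \<omega> < n}"
  define F where "F = measure M {\<omega>\<in>space M. X 1 \<omega> \<le> x}"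
  define th where "th = \<theta> 1 {0, 1}"
  define G where "G = (\<lambda>u. u*F*(1+th*(1-u)*(1-F)))"
  have ev: "\<And>P. {\<omega>\<in>space M. P (N \<omega>)} \<in> sets M"
  proof -
    fix P
    have "{\<omega>\<in>space M. P (N \<omega>)} = N -` {k. P k} \<inter> space M" by auto
    then show "{\<omega>\<in>space M. P (N \<omega>)} \<in> sets M" using measurable_sets[OF Nm, of "{k. P k}"] by simp
  qed
  have evX: "{\<omega>\<in>space M. X 1 \<omega> \<le> x} \<in> sets M" using X1m by measurable
  have ev2: "\<And>P. {\<omega>\<in>space M. X 1 \<omega> \<le> x \<and> P (N \<omega>)} \<in> sets M"
  proof -
    fix P
    have "{\<omega>\<in>space M. X 1 \<omega> \<le> x \<and> P (N \<omega>)} = {\<omega>\<in>space M. X 1 \<omega> \<le> x} \<inter> {\<omega>\<in>space M. P (N \<omega>)}" by auto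
    then show "{\<omega>\<in>space M. X 1 \<omega> \<le> x \<and> P (N \<omega>)} \<in> sets M" using evX ev by simp
  qed
  have gam: "measure M {\<omega>\<in>space M. N \<omega> = n} = a - q"
  proof -
    have e: "{\<omega>\<in>space M. N \<omega> = n} = {\<omega>\<in>space M. N \<omega> \<le> n} - {\<omega>\<in>space M. N \<omega> < n}" by auto
    have "measure M ({\<omega>\<in>space M. N \<omega> \<le> n} - {\<omega>\<in>space M. N \<omega> < n})
       = measure M {\<omega>\<in>space M. N \<omega> \<le> n} - measure M {\<omega>\<in>space M. N \<omega> < n}"
      by (rule finite_measure_Diff[OF ev ev]) auto
    then show ?thesis unfolding a_def q_def e .
  qed
  have G0: "G 0 = 0" unfolding G_def by simp
  have key: "measure M {\<omega>\<in>space M. X 1 \<omega> \<le> x \<and> N \<omega> = n} = G a - G q"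
  proof (cases "\<exists>m. 0 < measure M {\<omega>\<in>space M. N \<omega> = m} \<and> 1 \<le> m")
    case True
    then have cop: "\<And>m. measure M {\<omega>\<in>space M. N \<omega> \<le> m \<and> X 1 \<omega> \<le> x}
        = G (measure M {\<omega>\<in>space M. N \<omega> \<le> m})"
    proof -
      fix m
      have all: "\<forall>(n::nat) (x::nat \<Rightarrow> real).
           measure M {\<omega>\<in>space M. N \<omega> \<le> n \<and> (\<forall>j\<in>{1..1}. X j \<omega> \<le> x j)} =
           FGM_copula 1 (\<theta> 1)
             (\<lambda>m. if m = 0 then measure M {\<omega>\<in>space M. N \<omega> \<le> n}
                  else measure M {\<omega>\<in>space M. X 1 \<omega> \<le> x m})"
        using crm True unfolding CRM_FGM_star_def by blast
      have h: "measure M {\<omega>\<in>space M. N \<omega> \<le> m \<and> (\<forall>j\<in>{1..1}. X j \<omega> \<le> x)} =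
           FGM_copula 1 (\<theta> 1)
             (\<lambda>k. if k = 0 then measure M {\<omega>\<in>space M. N \<omega> \<le> m}
                  else measure M {\<omega>\<in>space M. X 1 \<omega> \<le> x})"
        using spec[OF spec[OF all, of m], of "\<lambda>_. x"] by simp
      have st: "{\<omega>\<in>space M. N \<omega> \<le> m \<and> (\<forall>j\<in>{1..1::nat}. X j \<omega> \<le> x)} = {\<omega>\<in>space M. N \<omega> \<le> m \<and> X 1 \<omega> \<le> x}" by auto
      have "measure M {\<omega>\<in>space M. N \<omega> \<le> m \<and> X 1 \<omega> \<le> x} =
         measure M {\<omega>\<in>space M. N \<omega> \<le> m} * F * (1 + th * ((1 - measure M {\<omega>\<in>space M. N \<omega> \<le> m}) * (1 - F)))"
        using h unfolding st FGM1 th_def F_def by simp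
      then show "measure M {\<omega>\<in>space M. N \<omega> \<le> m \<and> X 1 \<omega> \<le> x}
        = G (measure M {\<omega>\<in>space M. N \<omega> \<le> m})"
        unfolding G_def by (simp add: algebra_simps)
    qed
    have split: "{\<omega>\<in>space M. X 1 \<omega> \<le> x \<and> N \<omega> = n} =
       {\<omega>\<in>space M. X 1 \<omega> \<le> x \<and> N \<omega> \<le> n} - {\<omega>\<in>space M. X 1 \<omega> \<le> x \<and> N \<omega> < n}" by auto
    have d: "measure M {\<omega>\<in>space M. X 1 \<omega> \<le> x \<and> N \<omega> = n} =
       measure M {\<omega>\<in>space M. X 1 \<omega> \<le> x \<and> N \<omega> \<le> n} - measure M {\<omega>\<in>space M. X 1 \<omega> \<le> x \<and> N \<omega> < n}"
      unfolding split by (rule finite_measure_Diff[OF ev2 ev2]) auto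
    have c1: "measure M {\<omega>\<in>space M. X 1 \<omega> \<le> x \<and> N \<omega> \<le> n} = G a"
      using cop[of n] unfolding a_def by (simp add: conj_commute)
    have c2: "measure M {\<omega>\<in>space M. X 1 \<omega> \<le> x \<and> N \<omega> < n} = G q"
    proof (cases n)
      case 0
      then show ?thesis unfolding q_def using G0 by simp
    next
      case (Suc k)
      then have e1: "{\<omega>\<in>space M. X 1 \<omega> \<le> x \<and> N \<omega> < n} = {\<omega>\<in>space M. N \<omega> \<le> k \<and> X 1 \<omega> \<le> x}"
        and e2: "{\<omega>\<in>space M. N \<omega> < n} = {\<omega>\<in>space M. N \<omega> \<le> k}" by auto
      show ?thesis unfolding e1 q_def e2 by (rule cop)
    qed
    show ?thesis using d c1 c2 by simp
  next
    case False
    have n0: "n = 0" using False n_supp by (cases n) auto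
    have null: "measure M {\<omega>\<in>space M. 0 < N \<omega>} = 0"
    proof -
      have U: "{\<omega>\<in>space M. 0 < N \<omega>} = (\<Union>i. {\<omega>\<in>space M. N \<omega> = Suc i})"
        by (auto simp: gr0_conv_Suc)
      have z: "\<And>i. emeasure M {\<omega>\<in>space M. N \<omega> = Suc i} = 0"
      proof -
        fix i
        have "measure M {\<omega>\<in>space M. N \<omega> = Suc i} = 0"
          using False[unfolded not_ex, rule_format, of "Suc i"] measure_nonneg[of M "{\<omega>\<in>space M. N \<omega> = Suc i}"] by simp
        then show "emeasure M {\<omega>\<in>space M. N \<omega> = Suc i} = 0"
          by (simp add: emeasure_eq_measure)
      qed
      have "emeasure M {\<omega>\<in>space M. 0 < N \<omega>} = 0"
        unfolding U by (rule emeasure_UN_eq_0) (use z ev in auto)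
      then show ?thesis by (simp add: measure_def)
    qed
    have a1: "a = 1"
    proof -
      have "{\<omega>\<in>space M. N \<omega> \<le> n} = space M - {\<omega>\<in>space M. 0 < N \<omega>}" using n0 by auto
      then show ?thesis unfolding a_def using prob_compl[OF ev] null by simp
    qed
    have q0: "q = 0" unfolding q_def n0 by simp
    have "F = measure M ({\<omega>\<in>space M. X 1 \<omega> \<le> x \<and> N \<omega> = n} \<union> {\<omega>\<in>space M. X 1 \<omega> \<le> x \<and> 0 < N \<omega>})"
      unfolding F_def using n0 by (intro arg_cong[where f="measure M"]) auto
    also have "\<dots> = measure M {\<omega>\<in>space M. X 1 \<omega> \<le> x \<and> N \<omega> = n} + measure M {\<omega>\<in>space M. X 1 \<omega> \<le> x \<and> 0 < N \<omega>}"
      using n0 by (intro finite_measure_Union ev2) auto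
    also have "measure M {\<omega>\<in>space M. X 1 \<omega> \<le> x \<and> 0 < N \<omega>} = 0"
    proof -
      have "measure M {\<omega>\<in>space M. X 1 \<omega> \<le> x \<and> 0 < N \<omega>} \<le> measure M {\<omega>\<in>space M. 0 < N \<omega>}"
        by (intro finite_measure_mono ev) auto
      then show ?thesis using null measure_nonneg[of M] by (metis order_antisym)
    qed
    finally show ?thesis unfolding G_def a1 q0 by simp
  qed
  have pos: "a - q > 0" using n_supp gam by simp
  have mXF: "measure DX {..x} = F" using mX unfolding F_def .
  have mNa: "measure DN {..n} = a" unfolding a_def mN by simp
  have mNq: "measure DN {..<n} = q" unfolding q_def mN by simp
  have oc2: "ord_cdf DX 2 x = F^2" using ord_cdf_2[OF pDX sDX, of x] unfolding mXF .
  have oc1: "ord_cdf DX 1 x = 1 - (1 - F)^2" using ord_cdf_1[OF pDX sDX, of x] unfolding mXF .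
  have op2: "ord_pmf DN 2 n = a^2 - q^2" using ord_pmf_2[OF pDN sDN, of n] unfolding mNa mNq .
  have op1: "ord_pmf DN 1 n = (1 - q)^2 - (1 - a)^2" using ord_pmf_1[OF pDN sDN, of n] unfolding mNa mNq .
  have one: "(1::nat) + 1 = 2" by simp
  have sums: "(\<Sum>i0\<in>{0,1::nat}. \<Sum>i1\<in>{0,1::nat}.
        (1 + (-1) ^ (i0 + i1) * th) / 4 * ord_pmf DN (1 + i0) n * ord_cdf DX (1 + i1) x)
     = (1 + th)/4 * ((1-q)^2 - (1-a)^2) * (1 - (1-F)^2)
                + (1 - th)/4 * ((1-q)^2 - (1-a)^2) * F^2
                + (1 - th)/4 * (a^2 - q^2) * (1 - (1-F)^2)
                + (1 + th)/4 * (a^2 - q^2) * F^2"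
  proof -
    have e1: "ord_pmf DN (Suc 0) n = (1 - q)^2 - (1 - a)^2" using op1 by simp
    have e2: "ord_pmf DN (Suc (Suc 0)) n = a^2 - q^2" using op2 by (simp add: numeral_2_eq_2)
    have e3: "ord_cdf DX (Suc 0) x = 1 - (1 - F)^2" using oc1 by simp
    have e4: "ord_cdf DX (Suc (Suc 0)) x = F^2" using oc2 by (simp add: numeral_2_eq_2)
    show ?thesis by (simp add: e1 e2 e3 e4)
  qed
  have A: "(G a - G q) / (a - q) = (1/(a-q)) * (\<Sum>i0\<in>{0,1::nat}. \<Sum>i1\<in>{0,1::nat}.
        (1 + (-1) ^ (i0 + i1) * th) / 4 * ord_pmf DN (1 + i0) n * ord_cdf DX (1 + i1) x)"
    unfolding sums G_def using algebra_final[OF pos, of F th] by blast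
  have B: "(G a - G q) / (a - q) = F + th / 4 * ((ord_pmf DN 2 n - ord_pmf DN 1 n) / (a - q))
                        * (ord_cdf DX 2 x - ord_cdf DX 1 x)"
    unfolding op1 op2 oc1 oc2 G_def using algebra_final[OF pos, of F th] by blast
  show ?thesis
    unfolding Let_def DN_def[symmetric] DX_def[symmetric] th_def[symmetric] F_def[symmetric]
      gam key using A B by blast
qed

end
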